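(* Fix $N\ge1$. For any $T\ge1$, any $\varkappa\in\mathbb{P}'_T$ with $\varkappa_T>N$, and any $M\ge N$, $$\mathscr{D}_N\widetilde{\mathsf{F}}^{(M)}_\varkappa(u_1,\ldots,u_T\mid\mathbf{a},\boldsymbol\nu)=q^T(1-\nu_1\cdots\nu_N)\,\widetilde{\mathsf{F}}^{(M)}_\varkappa(u_1,\ldots,u_T\mid\mathbf{a},\boldsymbol\nu).$$ Moreover, for any $\ell\ge1$ and $N_1\ge\ldots\ge N_\ell\ge1$ with $N_1\le N$, $$\mathscr{D}_{N_\ell}\cdots\mathscr{D}_{N_1}\widetilde{\mathsf{F}}^{(M)}_\varkappa(u_1,\ldots,u_T\mid\mathbf{a},\boldsymbol\nu)=q^{\ell T}\,\widetilde{\mathsf{F}}^{(M)}_\varkappa(u_1,\ldots,u_T\mid\mathbf{a},\boldsymbol\nu)\cdot\bigl(\mathscr{D}_{N_\ell}\cdots\mathscr{D}_{N_1}1\bigr).$$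
   Context: Fix $q\in(0,1)$; $(z;q)_k=\prod_{i=0}^{k-1}(1-zq^i)$. Parameters: $u_1,u_2,\ldots\in(-\infty,0)$, $a_1,a_2,\ldots\in(0,\infty)$, $\nu_1,\nu_2,\ldots\in(0,1)$ with $a_i,\nu_i$ uniformly bounded away from the endpoints of their intervals, and with $a_i\mathsf{c}_j<1$ for all $i,j$, where $\mathsf{c}_j:=\nu_j/a_j$. $\mathbb{P}'_T$ is the set of integer partitions $\varkappa=(\varkappa_1\ge\ldots\ge\varkappa_T\ge1)$ with exactly $T$ positive parts; write $k_r:=\#\{i:\varkappa_i=r\}$. Define $$\mathsf{F}^{\mathrm{stoch}}_\varkappa(u_1,\ldots,u_T\mid\mathbf{a},\boldsymbol\nu):=\prod_{r\ge1}\frac{(\nu_r;q)_{k_r}}{(q;q)_{k_r}}\sum_{\sigma\in S_T}\sigma\Bigl(\prod_{1\le\alpha<\beta\le T}\frac{u_\alpha-qu_\beta}{u_\alpha-u_\beta}\prod_{i=1}^T\frac{1-q}{1-a_{\varkappa_i}u_i}\prod_{j=1}^{\varkappa_i-1}\frac{\nu_j-a_ju_i}{1-a_ju_i}\Bigr),$$ where $\sigma$ acts by permuting the variables $u_1,\ldots,u_T$ (not the $\varkappa_i$). Set $\Phi_M(u_1,\ldots,u_T):=\prod_{i=1}^T\prod_{j=1}^M(1-a_ju_i)$ and $\widetilde{\mathsf{F}}^{(M)}_\varkappa:=\Phi_M\,\mathsf{F}^{\mathrm{stoch}}_\varkappa$. $\mathscr{T}_{q;x}$ is the $q$-shift $x\mapsto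 qx$ in the variable $x$, and the operator $\mathscr{D}_N$ acts on functions of the $a_i$'s and $\nu_i$'s by $\mathscr{D}_N=\sum_{r=1}^N(1-\nu_r)\bigl(\prod_{1\le i\le N,\,i\ne r}\frac{a_i-\nu_ia_r}{a_i-a_r}\bigr)\mathscr{T}_{q;a_r}\mathscr{T}_{q;\nu_r}$; products of operators mean composition (rightmost first). *)

theory Defs
  imports Complex_Main "HOL-Combinatorics.Permutations"
begin

definition qpoch :: "real \<Rightarrow> real \<Rightarrow> nat \<Rightarrow> real" where
  "qpoch q z k = (\<Prod>i<k. (1 - z * q ^ i))"

text \<open>Partitions kappa in P'_T are lists [kappa_1,...,kappa_T], weakly decreasing,
  all parts positive; kappa_i = kappa ! (i - 1).  Variables u_1..u_T are u 1..u T;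
  parameters a_j, nu_j are a j, nu j (index 0 unused).\<close>
definition partP' :: "nat \<Rightarrow> nat list \<Rightarrow> bool" where
  "partP' T kappa \<longleftrightarrow> length kappa = T \<and> sorted_wrt (\<ge>) kappa \<and> (\<forall>x\<in>set kappa. x \<ge> 1)"

definition multip :: "nat list \<Rightarrow> nat \<Rightarrow> nat" where
  "multip kappa r = length (filter (\<lambda>x. x = r) kappa)"

definition Fterm :: "real \<Rightarrow> nat list \<Rightarrow> (nat \<Rightarrow> real) \<Rightarrow> (nat \<Rightarrow> real) \<Rightarrow> (nat \<Rightarrow> real) \<Rightarrow> real" where
  "Fterm q kappa u a nu =
     (let T = length kappa in
      (\<Prod>\<alpha>\<in>{1..T}. \<Prod>\<beta>\<in>{\<alpha><..T}. (u \<alpha> - q * u \<beta>) / (u \<alpha> - u \<beta>)) *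
      (\<Prod>i\<in>{1..T}. (1 - q) / (1 - a (kappa ! (i - 1)) * u i) *
          (\<Prod>j\<in>{1..<kappa ! (i - 1)}. (nu j - a j * u i) / (1 - a j * u i))))"

definition Fstoch :: "real \<Rightarrow> nat list \<Rightarrow> (nat \<Rightarrow> real) \<Rightarrow> (nat \<Rightarrow> real) \<Rightarrow> (nat \<Rightarrow> real) \<Rightarrow> real" where
  "Fstoch q kappa u a nu =
     (\<Prod>r\<in>set kappa. qpoch q (nu r) (multip kappa r) / qpoch q q (multip kappa r)) *
     (\<Sum>\<sigma>\<in>{\<sigma>. \<sigma> permutes {1..length kappa}}. Fterm q kappa (u \<circ> \<sigma>) a nu)"

definition Phi :: "nat \<Rightarrow> nat \<Rightarrow> (nat \<Rightarrow> real) \<Rightarrow> (nat \<Rightarrow> real) \<Rightarrow> real" where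
  "Phi M T u a = (\<Prod>i\<in>{1..T}. \<Prod>j\<in>{1..M}. (1 - a j * u i))"

definition Ftilde :: "real \<Rightarrow> nat \<Rightarrow> nat list \<Rightarrow> (nat \<Rightarrow> real) \<Rightarrow> (nat \<Rightarrow> real) \<Rightarrow> (nat \<Rightarrow> real) \<Rightarrow> real" where
  "Ftilde q M kappa u a nu = Phi M (length kappa) u a * Fstoch q kappa u a nu"

definition Dop :: "real \<Rightarrow> nat \<Rightarrow> ((nat \<Rightarrow> real) \<Rightarrow> (nat \<Rightarrow> real) \<Rightarrow> real)
                   \<Rightarrow> (nat \<Rightarrow> real) \<Rightarrow> (nat \<Rightarrow> real) \<Rightarrow> real" where
  "Dop q N f = (\<lambda>a nu. \<Sum>r\<in>{1..N}. (1 - nu r) *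
      (\<Prod>i\<in>{1..N} - {r}. (a i - nu i * a r) / (a i - a r)) *
      f (a(r := q * a r)) (nu(r := q * nu r)))"

text \<open>Dcomp q [N_1,...,N_l] f = D_{N_l} ... D_{N_1} f  (D_{N_1} applied first).\<close>
definition Dcomp :: "real \<Rightarrow> nat list \<Rightarrow> ((nat \<Rightarrow> real) \<Rightarrow> (nat \<Rightarrow> real) \<Rightarrow> real)
                   \<Rightarrow> (nat \<Rightarrow> real) \<Rightarrow> (nat \<Rightarrow> real) \<Rightarrow> real" where
  "Dcomp q Ns f = fold (\<lambda>N g. Dop q N g) Ns f"

end

theory Submission imports Defs begin

definition Xr :: "nat \<Rightarrow> nat \<Rightarrow> (nat \<Rightarrow> real) \<Rightarrow> (nat \<Rightarrow> real) \<Rightarrow> nat \<Rightarrow> real" where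
  "Xr M T u a r = (\<Prod>i\<in>{1..T}. \<Prod>j\<in>{1..M}-{r}. (1 - a j * u i))"

definition Vv :: "real \<Rightarrow> nat \<Rightarrow> (nat \<Rightarrow> real) \<Rightarrow> real" where
  "Vv q T u = (\<Prod>\<alpha>\<in>{1..T}. \<Prod>\<beta>\<in>{\<alpha><..T}. (u \<alpha> - q * u \<beta>) / (u \<alpha> - u \<beta>))"

definition Yr :: "real \<Rightarrow> nat list \<Rightarrow> (nat \<Rightarrow> real) \<Rightarrow> (nat \<Rightarrow> real) \<Rightarrow> (nat \<Rightarrow> real) \<Rightarrow> nat \<Rightarrow> real" where
  "Yr q kappa u a nu r = (\<Prod>i\<in>{1..length kappa}. (1 - q) / (1 - a (kappa ! (i - 1)) * u i) *
          (\<Prod>j\<in>{1..<kappa ! (i - 1)}-{r}. (nu j - a j * u i) / (1 - a j * u i)))"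

lemma Phi_split:
  assumes "r \<in> {1..M}"
  shows "Phi M T u a = (\<Prod>i\<in>{1..T}. 1 - a r * u i) * Xr M T u a r"
  unfolding Phi_def Xr_def prod.distrib[symmetric]
proof (intro prod.cong refl)
  fix i show "(\<Prod>j\<in>{1..M}. 1 - a j * u i) = (1 - a r * u i) * (\<Prod>j\<in>{1..M}-{r}. 1 - a j * u i)"
    by (rule prod.remove) (use assms in auto)
qed

lemma Xr_upd: "Xr M T u (a(r:=\<alpha>)) r = Xr M T u a r"
  unfolding Xr_def by (intro prod.cong refl) auto

lemma Yr_upd:
  assumes "\<forall>x\<in>set kappa. r < x"
  shows "Yr q kappa u (a(r:=\<alpha>)) (nu(r:=\<beta>)) r = Yr q kappa u a nu r"
  unfolding Yr_def
proof (intro prod.cong refl)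
  fix i assume i: "i \<in> {1..length kappa}"
  then have "kappa ! (i-1) \<in> set kappa" by auto
  with assms have ne: "kappa ! (i-1) \<noteq> r" by auto
  show "(1 - q) / (1 - (a(r := \<alpha>)) (kappa ! (i - 1)) * u i) *
          (\<Prod>j\<in>{1..<kappa ! (i - 1)} - {r}. ((nu(r := \<beta>)) j - (a(r := \<alpha>)) j * u i) / (1 - (a(r := \<alpha>)) j * u i)) =
        (1 - q) / (1 - a (kappa ! (i - 1)) * u i) *
          (\<Prod>j\<in>{1..<kappa ! (i - 1)} - {r}. (nu j - a j * u i) / (1 - a j * u i))"
    using ne by (auto intro!: prod.cong)
qed

lemma Fterm_split:
  assumes "1 \<le> r" "\<forall>x\<in>set kappa. r < x"
  shows "Fterm q kappa w a nu = Vv q (length kappa) w * Yr q kappa w a nu r *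
     (\<Prod>i\<in>{1..length kappa}. (nu r - a r * w i) / (1 - a r * w i))"
proof -
  have "(\<Prod>i\<in>{1..length kappa}. (1 - q) / (1 - a (kappa ! (i - 1)) * w i) *
          (\<Prod>j\<in>{1..<kappa ! (i - 1)}. (nu j - a j * w i) / (1 - a j * w i)))
     = (\<Prod>i\<in>{1..length kappa}. ((1 - q) / (1 - a (kappa ! (i - 1)) * w i) *
          (\<Prod>j\<in>{1..<kappa ! (i - 1)}-{r}. (nu j - a j * w i) / (1 - a j * w i))) *
          ((nu r - a r * w i) / (1 - a r * w i)))"
  proof (intro prod.cong refl)
    fix i assume i: "i \<in> {1..length kappa}"
    then have "kappa ! (i-1) \<in> set kappa" by auto
    with assms have "r \<in> {1..<kappa ! (i-1)}" by auto
    then show "(1 - q) / (1 - a (kappa ! (i - 1)) * w i) *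
          (\<Prod>j\<in>{1..<kappa ! (i - 1)}. (nu j - a j * w i) / (1 - a j * w i)) =
          ((1 - q) / (1 - a (kappa ! (i - 1)) * w i) *
          (\<Prod>j\<in>{1..<kappa ! (i - 1)}-{r}. (nu j - a j * w i) / (1 - a j * w i))) *
          ((nu r - a r * w i) / (1 - a r * w i))"
    proof -
      have "(\<Prod>j\<in>{1..<kappa ! (i - 1)}. (nu j - a j * w i) / (1 - a j * w i)) =
         ((nu r - a r * w i) / (1 - a r * w i)) * (\<Prod>j\<in>{1..<kappa ! (i - 1)}-{r}. (nu j - a j * w i) / (1 - a j * w i))"
        by (rule prod.remove) (use \<open>r \<in> _\<close> in auto)
      then show ?thesis by (simp only: ac_simps)
    qed
  qed
  then show ?thesis
    unfolding Fterm_def Vv_def Yr_def Let_def prod.distrib by (simp only: mult.assoc)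
qed

lemma key:
  assumes r: "1 \<le> r" "r \<le> M" "\<forall>x\<in>set kappa. r < x"
    and \<sigma>: "\<sigma> permutes {1..length kappa}"
    and nz: "\<forall>i\<in>{1..length kappa}. 1 - a r * u i \<noteq> 0"
  shows "Phi M (length kappa) u a * Fterm q kappa (u \<circ> \<sigma>) a nu
    = Xr M (length kappa) u a r * Vv q (length kappa) (u \<circ> \<sigma>) * Yr q kappa (u \<circ> \<sigma>) a nu r
       * (\<Prod>i\<in>{1..length kappa}. nu r - a r * u i)"
proof -
  let ?T = "length kappa"
  have b: "bij_betw \<sigma> {1..?T} {1..?T}" using \<sigma> by (rule permutes_imp_bij)
  have p1: "(\<Prod>i\<in>{1..?T}. 1 - a r * u i) = (\<Prod>i\<in>{1..?T}. 1 - a r * (u \<circ> \<sigma>) i)"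
    using prod.reindex_bij_betw[OF b, of "\<lambda>i. 1 - a r * u i"] by simp
  have p2: "(\<Prod>i\<in>{1..?T}. nu r - a r * u i) = (\<Prod>i\<in>{1..?T}. nu r - a r * (u \<circ> \<sigma>) i)"
    using prod.reindex_bij_betw[OF b, of "\<lambda>i. nu r - a r * u i"] by simp
  have nz': "\<forall>i\<in>{1..?T}. 1 - a r * (u \<circ> \<sigma>) i \<noteq> 0"
  proof
    fix i assume "i \<in> {1..?T}"
    then have "\<sigma> i \<in> {1..?T}" using permutes_in_image[OF \<sigma>] by blast
    then show "1 - a r * (u \<circ> \<sigma>) i \<noteq> 0" using nz by simp
  qed
  have p3: "(\<Prod>i\<in>{1..?T}. 1 - a r * (u \<circ> \<sigma>) i) * (\<Prod>i\<in>{1..?T}. (nu r - a r * (u \<circ> \<sigma>) i) / (1 - a r * (u \<circ> \<sigma>) i))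
     = (\<Prod>i\<in>{1..?T}. nu r - a r * (u \<circ> \<sigma>) i)"
    unfolding prod.distrib[symmetric] using nz' by (intro prod.cong refl) auto
  have rM: "r \<in> {1..M}" using r by auto
  show ?thesis
    unfolding Phi_split[OF rM] Fterm_split[OF r(1) r(3)]
    using r p1 p2 p3 by (simp add: ac_simps)
qed

lemma term_scale:
  assumes q: "0 < q" and r: "1 \<le> r" "r \<le> M" "\<forall>x\<in>set kappa. r < x"
    and \<sigma>: "\<sigma> permutes {1..length kappa}"
    and ar: "0 < a r" and u: "\<forall>i\<in>{1..length kappa}. u i < 0"
  shows "Phi M (length kappa) u (a(r := q * a r)) * Fterm q kappa (u \<circ> \<sigma>) (a(r := q * a r)) (nu(r := q * nu r))
     = q ^ length kappa * (Phi M (length kappa) u a * Fterm q kappa (u \<circ> \<sigma>) a nu)"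
proof -
  let ?T = "length kappa"
  have nz1: "\<forall>i\<in>{1..?T}. 1 - a r * u i \<noteq> 0"
  proof
    fix i assume "i \<in> {1..?T}" then have "u i < 0" using u by auto
    then have "a r * u i < 0" using ar by (simp add: mult_pos_neg)
    then show "1 - a r * u i \<noteq> 0" by simp
  qed
  have nz2: "\<forall>i\<in>{1..?T}. 1 - (a(r := q * a r)) r * u i \<noteq> 0"
  proof
    fix i assume "i \<in> {1..?T}" then have "u i < 0" using u by auto
    then have "(q * a r) * u i < 0" using ar q by (simp add: mult_pos_neg)
    then show "1 - (a(r := q * a r)) r * u i \<noteq> 0" by simp
  qed
  have pr: "(\<Prod>i\<in>{1..?T}. (nu(r := q * nu r)) r - (a(r := q * a r)) r * u i)
      = q ^ ?T * (\<Prod>i\<in>{1..?T}. nu r - a r * u i)"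
  proof -
    have "(\<Prod>i\<in>{1..?T}. (nu(r := q * nu r)) r - (a(r := q * a r)) r * u i)
        = (\<Prod>i\<in>{1..?T}. q * (nu r - a r * u i))"
      by (simp add: algebra_simps)
    also have "\<dots> = q ^ ?T * (\<Prod>i\<in>{1..?T}. nu r - a r * u i)"
      by (simp add: prod.distrib)
    finally show ?thesis .
  qed
  show ?thesis
    unfolding key[where a=a and r=r and u=u and kappa=kappa and M=M, OF r \<sigma> nz1] key[where a="a(r := q * a r)" and r=r and u=u and kappa=kappa and M=M, OF r \<sigma> nz2]
    unfolding Xr_upd Yr_upd[OF r(3)] pr by (simp add: ac_simps)
qed

lemma Ftilde_scale:
  assumes q: "0 < q" and r: "1 \<le> r" "r \<le> M" "\<forall>x\<in>set kappa. r < x"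
    and ar: "0 < a r" and u: "\<forall>i\<in>{1..length kappa}. u i < 0"
  shows "Ftilde q M kappa u (a(r := q * a r)) (nu(r := q * nu r)) = q ^ length kappa * Ftilde q M kappa u a nu"
proof -
  let ?P = "\<lambda>nu. (\<Prod>r\<in>set kappa. qpoch q (nu r) (multip kappa r) / qpoch q q (multip kappa r))"
  have P: "?P (nu(r := q * nu r)) = ?P nu"
    by (intro prod.cong refl) (use r(3) in auto)
  have S: "Phi M (length kappa) u (a(r := q * a r)) * (\<Sum>\<sigma>\<in>{\<sigma>. \<sigma> permutes {1..length kappa}}. Fterm q kappa (u \<circ> \<sigma>) (a(r := q * a r)) (nu(r := q * nu r)))
     = q ^ length kappa * (Phi M (length kappa) u a * (\<Sum>\<sigma>\<in>{\<sigma>. \<sigma> permutes {1..length kappa}}. Fterm q kappa (u \<circ> \<sigma>) a nu))"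
    unfolding sum_distrib_left
    by (intro sum.cong refl) (simp add: term_scale[where a=a and r=r and u=u and kappa=kappa and q=q and M=M, OF q r _ ar u])
  show ?thesis
    unfolding Ftilde_def Fstoch_def P using S by (simp add: ac_simps)
qed

definition gg :: "(nat \<Rightarrow> real) \<Rightarrow> (nat \<Rightarrow> real) \<Rightarrow> nat \<Rightarrow> real \<Rightarrow> real" where
  "gg a nu i z = (a i - nu i * z) / (a i - z)"

lemma aux_pf:
  fixes x y z n c G :: real
  assumes "x \<noteq> z" "y \<noteq> z" "x \<noteq> y"
  shows "(x - n*z)/(x-z) * (c/(y-z)*G) = (1-n)*x/(x-z)*(c/(y-x)*G) + c/(y-z)*((x - n*y)/(x-y)*G)"
proof -
  have d: "x - z \<noteq> 0" "y - z \<noteq> 0" "x - y \<noteq> 0" "y - x \<noteq> 0" using assms by auto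
  have e: "c/(y-x) = - (c/(x-y))" by (metis minus_diff_eq divide_minus_right)
  show ?thesis unfolding e using d by (simp add: divide_simps) (simp add: algebra_simps)
qed

lemma pf:
  assumes "finite S"
  shows "inj_on a S \<Longrightarrow> (\<forall>i\<in>S. z \<noteq> a i) \<Longrightarrow> (\<Prod>i\<in>S. gg a nu i z) = (\<Prod>i\<in>S. nu i)
     + (\<Sum>r\<in>S. (1 - nu r) * a r / (a r - z) * (\<Prod>i\<in>S-{r}. gg a nu i (a r)))"
  using assms
proof (induction S arbitrary: z rule: finite_induct)
  case empty then show ?case by simp
next
  case (insert k S)
  let ?P = "\<Prod>i\<in>S. nu i"
  let ?G = "\<lambda>r. \<Prod>i\<in>S-{r}. gg a nu i (a r)"
  have inj: "inj_on a S" and akS: "\<forall>i\<in>S. a k \<noteq> a i" using insert.prems(1) insert.hyps(2)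
    by (auto simp: inj_on_def)
  have z: "\<forall>i\<in>S. z \<noteq> a i" "z \<noteq> a k" using insert.prems(2) by auto
  have IH1: "(\<Prod>i\<in>S. gg a nu i z) = ?P + (\<Sum>r\<in>S. (1 - nu r) * a r / (a r - z) * ?G r)"
    using insert.IH[OF inj z(1)] .
  have IH2: "(\<Prod>i\<in>S. gg a nu i (a k)) = ?P + (\<Sum>r\<in>S. (1 - nu r) * a r / (a r - a k) * ?G r)"
    using insert.IH[OF inj] akS by auto
  have G': "\<And>r. r \<in> S \<Longrightarrow> (\<Prod>i\<in>insert k S - {r}. gg a nu i (a r)) = gg a nu k (a r) * ?G r"
  proof -
    fix r assume "r \<in> S"
    then have "insert k S - {r} = insert k (S - {r})" using insert.hyps(2) by auto
    then show "(\<Prod>i\<in>insert k S - {r}. gg a nu i (a r)) = gg a nu k (a r) * ?G r"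
      using insert.hyps by simp
  qed
  have Gk: "insert k S - {k} = S" using insert.hyps(2) by auto
  have trm: "\<And>r. r \<in> S \<Longrightarrow> gg a nu k z * ((1 - nu r) * a r / (a r - z) * ?G r)
     = (1 - nu k) * a k / (a k - z) * ((1 - nu r) * a r / (a r - a k) * ?G r)
       + (1 - nu r) * a r / (a r - z) * (gg a nu k (a r) * ?G r)"
  proof -
    fix r assume rS: "r \<in> S"
    have d1: "a k - z \<noteq> 0" using z by auto
    have d2: "a r - z \<noteq> 0" using z rS by auto
    have d3: "a r - a k \<noteq> 0" using akS rS by auto
    have d3': "a k - a r \<noteq> 0" using d3 by auto
    show "gg a nu k z * ((1 - nu r) * a r / (a r - z) * ?G r)
     = (1 - nu k) * a k / (a k - z) * ((1 - nu r) * a r / (a r - a k) * ?G r)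
       + (1 - nu r) * a r / (a r - z) * (gg a nu k (a r) * ?G r)"
      unfolding gg_def by (rule aux_pf) (use z rS akS in auto)
  qed
  have tP: "gg a nu k z * ?P = ?P * nu k + (1 - nu k) * a k / (a k - z) * ?P"
    unfolding gg_def using z(2) by (simp add: field_simps)
  have "(\<Prod>i\<in>insert k S. gg a nu i z) = gg a nu k z * ?P + (\<Sum>r\<in>S. gg a nu k z * ((1 - nu r) * a r / (a r - z) * ?G r))"
    using insert.hyps IH1 by (simp add: distrib_left sum_distrib_left)
  also have "\<dots> = ?P * nu k + (1 - nu k) * a k / (a k - z) * ?P
     + (\<Sum>r\<in>S. (1 - nu k) * a k / (a k - z) * ((1 - nu r) * a r / (a r - a k) * ?G r))
     + (\<Sum>r\<in>S. (1 - nu r) * a r / (a r - z) * (gg a nu k (a r) * ?G r))"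
  proof -
    have "(\<Sum>r\<in>S. gg a nu k z * ((1 - nu r) * a r / (a r - z) * ?G r)) =
      (\<Sum>r\<in>S. (1 - nu k) * a k / (a k - z) * ((1 - nu r) * a r / (a r - a k) * ?G r)
       + (1 - nu r) * a r / (a r - z) * (gg a nu k (a r) * ?G r))"
      by (rule sum.cong[OF refl trm])
    then show ?thesis unfolding tP sum.distrib by simp
  qed
  also have "\<dots> = ?P * nu k + (1 - nu k) * a k / (a k - z) * (\<Prod>i\<in>S. gg a nu i (a k))
     + (\<Sum>r\<in>S. (1 - nu r) * a r / (a r - z) * (\<Prod>i\<in>insert k S - {r}. gg a nu i (a r)))"
    unfolding IH2 by (simp add: distrib_left sum_distrib_left G')
  also have "\<dots> = (\<Prod>i\<in>insert k S. nu i)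
     + (\<Sum>r\<in>insert k S. (1 - nu r) * a r / (a r - z) * (\<Prod>i\<in>insert k S - {r}. gg a nu i (a r)))"
    using insert.hyps Gk by (simp add: ac_simps)
  finally show ?case .
qed

lemma Dop_one:
  assumes a: "\<forall>i\<in>{1..N}. a i \<noteq> 0" and inj: "inj_on a {1..N}"
  shows "Dop q N (\<lambda>_ _. 1) a nu = 1 - (\<Prod>i\<in>{1..N}. nu i)"
proof -
  have "(\<Prod>i\<in>{1..N}. gg a nu i 0) = (\<Prod>i\<in>{1..N}. nu i)
     + (\<Sum>r\<in>{1..N}. (1 - nu r) * a r / (a r - 0) * (\<Prod>i\<in>{1..N}-{r}. gg a nu i (a r)))"
    using pf[of "{1..N}" a 0 nu] inj a by auto
  moreover have "(\<Prod>i\<in>{1..N}. gg a nu i 0) = 1" using a by (simp add: gg_def)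
  moreover have "(\<Sum>r\<in>{1..N}. (1 - nu r) * a r / (a r - 0) * (\<Prod>i\<in>{1..N}-{r}. gg a nu i (a r)))
     = Dop q N (\<lambda>_ _. 1) a nu"
    unfolding Dop_def gg_def using a by (intro sum.cong refl) auto
  ultimately show ?thesis by simp
qed

lemma Dcomp_F:
  assumes scale: "\<forall>r\<in>{1..N}. \<forall>a nu. (\<forall>i\<in>{1..N}. 0 < a i) \<longrightarrow> F (a(r := q*a r)) (nu(r:=q*nu r)) = q^T * F a nu"
    and q: "0 < q"
  shows "\<forall>n\<in>set Ns. n \<le> N \<Longrightarrow> \<forall>a nu. (\<forall>i\<in>{1..N}. 0 < a i) \<longrightarrow>
     Dcomp q Ns F a nu = q^(length Ns * T) * F a nu * Dcomp q Ns (\<lambda>_ _. 1) a nu"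
proof (induction Ns rule: rev_induct)
  case Nil then show ?case by (simp add: Dcomp_def)
next
  case (snoc n xs)
  have IH: "\<forall>a nu. (\<forall>i\<in>{1..N}. 0 < a i) \<longrightarrow>
     Dcomp q xs F a nu = q^(length xs * T) * F a nu * Dcomp q xs (\<lambda>_ _. 1) a nu"
    using snoc by auto
  have nN: "n \<le> N" using snoc.prems by auto
  have D: "\<And>f. Dcomp q (xs @ [n]) f = Dop q n (Dcomp q xs f)" by (simp add: Dcomp_def)
  show ?case
  proof (intro allI impI)
    fix a nu :: "nat \<Rightarrow> real" assume pos: "\<forall>i\<in>{1..N}. 0 < a i"
    have sh: "\<And>r. r \<in> {1..n} \<Longrightarrow> Dcomp q xs F (a(r := q*a r)) (nu(r:=q*nu r))
       = q^(length xs * T) * (q^T * F a nu) * Dcomp q xs (\<lambda>_ _. 1) (a(r := q*a r)) (nu(r:=q*nu r))"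
    proof -
      fix r assume r: "r \<in> {1..n}"
      have pos': "\<forall>i\<in>{1..N}. 0 < (a(r := q*a r)) i" using pos q r nN by auto
      have "F (a(r := q*a r)) (nu(r:=q*nu r)) = q^T * F a nu" using scale pos r nN by auto
      then show "Dcomp q xs F (a(r := q*a r)) (nu(r:=q*nu r))
       = q^(length xs * T) * (q^T * F a nu) * Dcomp q xs (\<lambda>_ _. 1) (a(r := q*a r)) (nu(r:=q*nu r))"
        using IH pos' by simp
    qed
    have "Dcomp q (xs @ [n]) F a nu = (\<Sum>r\<in>{1..n}. (1 - nu r) *
      (\<Prod>i\<in>{1..n} - {r}. (a i - nu i * a r) / (a i - a r)) *
      (q^(length xs * T) * (q^T * F a nu) * Dcomp q xs (\<lambda>_ _. 1) (a(r := q*a r)) (nu(r:=q*nu r))))"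
      unfolding D Dop_def using sh by (intro sum.cong refl) auto
    also have "\<dots> = q^(length (xs @ [n]) * T) * F a nu * Dcomp q (xs @ [n]) (\<lambda>_ _. 1) a nu"
      unfolding D Dop_def sum_distrib_left by (intro sum.cong refl) (simp add: power_add ac_simps)
    finally show "Dcomp q (xs @ [n]) F a nu = q^(length (xs @ [n]) * T) * F a nu * Dcomp q (xs @ [n]) (\<lambda>_ _. 1) a nu" .
  qed
qed

lemma last_le:
  assumes "sorted_wrt (\<ge>) xs" "xs \<noteq> []" "x \<in> set xs"
  shows "last xs \<le> (x::nat)"
proof -
  have "xs = butlast xs @ [last xs]" using assms(2) by simp
  then have "sorted_wrt (\<ge>) (butlast xs @ [last xs])" using assms(1) by simp
  then have "\<forall>y\<in>set (butlast xs). last xs \<le> y" by (simp add: sorted_wrt_append)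
  moreover have "x \<in> set (butlast xs) \<or> x = last xs"
    using assms(3) \<open>xs = _\<close> by (metis Un_iff empty_iff empty_set list.set(2) set_append singletonD)
  ultimately show ?thesis by auto
qed

theorem lemma4p5:
  fixes q :: real and N M T :: nat and kappa :: "nat list"
    and u a nu :: "nat \<Rightarrow> real"
  assumes q: "0 < q" "q < 1"
    and N: "N \<ge> 1"
    and T: "T \<ge> 1"
    and kappa: "partP' T kappa" "last kappa > N"
    and M: "M \<ge> N"
    and u: "\<forall>i\<ge>1. u i < 0"
    and a: "\<forall>i\<ge>1. 0 < a i"
    and nu: "\<forall>i\<ge>1. 0 < nu i \<and> nu i < 1"
    and bdd: "\<exists>\<epsilon>>0. \<forall>i\<ge>1. \<epsilon> \<le> a i \<and> a i \<le> 1 / \<epsilon> \<and> \<epsilon> \<le> nu i \<and> nu i \<le> 1 - \<epsilon>"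
    and ac: "\<forall>i\<ge>1. \<forall>j\<ge>1. a i * (nu j / a j) < 1"
    and dist: "\<forall>i\<in>{1..N}. \<forall>j\<in>{1..N}. i \<noteq> j \<longrightarrow> a i \<noteq> a j"
  shows "Dop q N (Ftilde q M kappa u) a nu
           = q ^ T * (1 - (\<Prod>i\<in>{1..N}. nu i)) * Ftilde q M kappa u a nu
         \<and> (\<forall>Ns. Ns \<noteq> [] \<longrightarrow> sorted_wrt (\<ge>) Ns \<longrightarrow> (\<forall>n\<in>set Ns. n \<ge> 1) \<longrightarrow> hd Ns \<le> N \<longrightarrow>
          (\<forall>i\<in>{1..N}. \<forall>j\<in>{1..N}. \<forall>k l :: nat. i \<noteq> j \<longrightarrow> q ^ k * a i \<noteq> q ^ l * a j) \<longrightarrow>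
          Dcomp q Ns (Ftilde q M kappa u) a nu
            = q ^ (length Ns * T) * Ftilde q M kappa u a nu * Dcomp q Ns (\<lambda>_ _. 1) a nu)"
proof -
  have len: "length kappa = T" and srt: "sorted_wrt (\<ge>) kappa" using kappa(1) by (auto simp: partP'_def)
  have ne: "kappa \<noteq> []" using len T by auto
  have big: "\<forall>x\<in>set kappa. N < x" using last_le[OF srt ne] kappa(2) by fastforce
  have uT: "\<forall>i\<in>{1..length kappa}. u i < 0" using u by auto
  have scale: "\<forall>r\<in>{1..N}. \<forall>a nu. (\<forall>i\<in>{1..N}. 0 < a i) \<longrightarrow>
      Ftilde q M kappa u (a(r := q*a r)) (nu(r:=q*nu r)) = q^T * Ftilde q M kappa u a nu"
  proof (intro ballI allI impI)
    fix r and a' nu' :: "nat \<Rightarrow> real" assume r: "r \<in> {1..N}" and p: "\<forall>i\<in>{1..N}. 0 < a' i"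
    have r': "1 \<le> r" "r \<le> M" "\<forall>x\<in>set kappa. r < x" using r M big by auto
    show "Ftilde q M kappa u (a'(r := q*a' r)) (nu'(r:=q*nu' r)) = q^T * Ftilde q M kappa u a' nu'"
      using Ftilde_scale[where a=a' and r=r and u=u and kappa=kappa and q=q and M=M and nu=nu', OF q(1) r'] p r uT len
      by auto
  qed
  have apos: "\<forall>i\<in>{1..N}. 0 < a i" using a by auto
  note DF = Dcomp_F[OF scale q(1)]
  have c1: "Dop q N (Ftilde q M kappa u) a nu = q ^ T * (1 - (\<Prod>i\<in>{1..N}. nu i)) * Ftilde q M kappa u a nu"
  proof -
    have "Dcomp q [N] (Ftilde q M kappa u) a nu = q^(length [N] * T) * Ftilde q M kappa u a nu * Dcomp q [N] (\<lambda>_ _. 1) a nu"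
      using DF[of "[N]"] apos by auto
    moreover have "Dop q N (\<lambda>_ _. 1) a nu = 1 - (\<Prod>i\<in>{1..N}. nu i)"
      by (rule Dop_one) (use apos dist in \<open>auto simp: inj_on_def\<close>)
    ultimately show ?thesis by (simp add: Dcomp_def)
  qed
  have c2: "\<forall>Ns. Ns \<noteq> [] \<longrightarrow> sorted_wrt (\<ge>) Ns \<longrightarrow> hd Ns \<le> N \<longrightarrow>
          Dcomp q Ns (Ftilde q M kappa u) a nu
            = q ^ (length Ns * T) * Ftilde q M kappa u a nu * Dcomp q Ns (\<lambda>_ _. 1) a nu"
  proof (intro allI impI)
    fix Ns :: "nat list" assume h: "Ns \<noteq> []" "sorted_wrt (\<ge>) Ns" "hd Ns \<le> N"
    then obtain x xs where Ns: "Ns = x # xs" by (cases Ns) auto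
    have "\<forall>n\<in>set Ns. n \<le> N" using h unfolding Ns by auto
    then show "Dcomp q Ns (Ftilde q M kappa u) a nu
            = q ^ (length Ns * T) * Ftilde q M kappa u a nu * Dcomp q Ns (\<lambda>_ _. 1) a nu"
      using DF apos by blast
  qed
  show ?thesis using c1 c2 by blast
qed

end
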